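(* Let $C$ be a normal, closed cone with nonempty interior in a real Banach space and let $u\in\operatorname{int} C$. Then the map $f(x)=x+u$ is $\tau$-condensing on $\operatorname{int} C$.
   Context: A closed cone $C$ (closed convex, $\lambda C\subseteq C$ for $\lambda\ge0$, $C\cap(-C)=\{0\}$) induces the order $x\le y$ iff $y-x\in C$. $C$ is normal if there is $\kappa$ with $\|x\|\le\kappa\|y\|$ whenever $0\le x\le y$. Thompson's metric on $\operatorname{int}C$: $d_T(x,y)=\log\inf\{\beta\ge1:\beta^{-1}x\le y\le\beta x\}$. For a $d_T$-bounded set $A\subseteq\operatorname{int}C$, $\tau(A)=\inf\{d>0: A$ has a finite cover by sets of $d_T$-diameter $\le d\}$. A continuous map $f:D\to\operatorname{int}C$ ($D\subseteq \operatorname{int}C$) is $\tau$-condensing if $\tau(f(A))<\tau(A)$ for every $d_T$-bounded $A\subseteq D$ with $\tau(A)>0$. *)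

theory Defs
  imports "HOL-Analysis.Analysis"
begin

definition closed_cone :: "'a::real_normed_vector set \<Rightarrow> bool" where
  "closed_cone C \<longleftrightarrow> closed C \<and> convex C \<and>
     (\<forall>t::real. \<forall>x\<in>C. t \<ge> 0 \<longrightarrow> t *\<^sub>R x \<in> C) \<and>
     C \<inter> uminus ` C = {0}"

definition cone_le :: "'a::real_normed_vector set \<Rightarrow> 'a \<Rightarrow> 'a \<Rightarrow> bool" where
  "cone_le C x y \<longleftrightarrow> y - x \<in> C"

definition normal_cone :: "'a::real_normed_vector set \<Rightarrow> bool" where
  "normal_cone C \<longleftrightarrow> (\<exists>\<kappa>::real. \<forall>x y. cone_le C 0 x \<and> cone_le C x y \<longrightarrow> norm x \<le> \<kappa> * norm y)"

definition thompson :: "'a::real_normed_vector set \<Rightarrow> 'a \<Rightarrow> 'a \<Rightarrow> real" where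
  "thompson C x y = ln (Inf {\<beta>::real. \<beta> \<ge> 1 \<and> cone_le C ((1/\<beta>) *\<^sub>R x) y \<and> cone_le C y (\<beta> *\<^sub>R x)})"

definition thompson_bounded :: "'a::real_normed_vector set \<Rightarrow> 'a set \<Rightarrow> bool" where
  "thompson_bounded C A \<longleftrightarrow> A \<subseteq> interior C \<and> (\<exists>M. \<forall>x\<in>A. \<forall>y\<in>A. thompson C x y \<le> M)"

definition tau :: "'a::real_normed_vector set \<Rightarrow> 'a set \<Rightarrow> real" where
  "tau C A = Inf {d. d > 0 \<and> (\<exists>F. finite F \<and> A \<subseteq> \<Union>F \<and>
       (\<forall>S\<in>F. S \<subseteq> interior C \<and> (\<forall>x\<in>S. \<forall>y\<in>S. thompson C x y \<le> d)))}"

definition tau_condensing :: "'a::real_normed_vector set \<Rightarrow> 'a set \<Rightarrow> ('a \<Rightarrow> 'a) \<Rightarrow> bool" where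
  "tau_condensing C D f \<longleftrightarrow> D \<subseteq> interior C \<and> continuous_on D f \<and> f ` D \<subseteq> interior C \<and>
     (\<forall>A. A \<subseteq> D \<and> thompson_bounded C A \<and> tau C A > 0 \<longrightarrow> tau C (f ` A) < tau C A)"

end

theory Submission
  imports Defs
begin

lemma cc_scale: "closed_cone C \<Longrightarrow> x \<in> C \<Longrightarrow> (t::real) \<ge> 0 \<Longrightarrow> t *\<^sub>R x \<in> C"
  unfolding closed_cone_def by blast

lemma cc_add:
  assumes "closed_cone C" "x \<in> C" "y \<in> C" shows "x + y \<in> C"
proof -
  have cv: "convex C" using assms(1) unfolding closed_cone_def by blast
  have "(1/2::real) *\<^sub>R x + (1/2::real) *\<^sub>R y \<in> C"
    using convexD[OF cv assms(2,3), of "1/2" "1/2"] by simp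
  from cc_scale[OF assms(1) this, of 2] show ?thesis by (simp add: scaleR_right_distrib)
qed

lemma cc_int_dom:
  assumes "closed_cone C" "x \<in> interior C"
  shows "\<exists>r>0. r *\<^sub>R x - y \<in> C"
proof -
  obtain e where e: "e > 0" "ball x e \<subseteq> C" using assms(2) by (meson mem_interior)
  define s where "s = e / (norm y + 1)"
  have "norm y + 1 > 0" by (simp add: add_nonneg_pos)
  hence s: "s > 0" using e by (simp add: s_def)
  have "norm (s *\<^sub>R y) < e"
  proof -
    have "norm (s *\<^sub>R y) = s * norm y" using s by simp
    also have "\<dots> = e * norm y / (norm y + 1)" by (simp add: s_def)
    also have "\<dots> < e" using e(1) \<open>norm y + 1 > 0\<close> by (simp add: divide_less_eq)
    finally show ?thesis .
  qed
  hence "x - s *\<^sub>R y \<in> C" using e(2) by (auto simp: dist_norm)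
  from cc_scale[OF assms(1) this, of "1/s"] s
  have "(1/s) *\<^sub>R x - y \<in> C" by (simp add: scaleR_diff_right)
  thus ?thesis using s by (intro exI[of _ "1/s"]) auto
qed

lemma thompson_set_ne:
  assumes "closed_cone C" "x \<in> interior C" "y \<in> interior C"
  shows "{\<beta>::real. \<beta> \<ge> 1 \<and> cone_le C ((1/\<beta>) *\<^sub>R x) y \<and> cone_le C y (\<beta> *\<^sub>R x)} \<noteq> {}"
proof -
  obtain r1 where r1: "r1 > 0" "r1 *\<^sub>R x - y \<in> C" using cc_int_dom[OF assms(1,2)] by blast
  obtain r2 where r2: "r2 > 0" "r2 *\<^sub>R y - x \<in> C" using cc_int_dom[OF assms(1,3)] by blast
  define b where "b = max (max r1 r2) 1"
  have xC: "x \<in> C" "y \<in> C" using assms interior_subset by auto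
  have "(b - r1) *\<^sub>R x + (r1 *\<^sub>R x - y) \<in> C"
    by (rule cc_add[OF assms(1) cc_scale[OF assms(1) xC(1)] r1(2)]) (simp add: b_def)
  hence 1: "b *\<^sub>R x - y \<in> C" by (simp add: algebra_simps)
  have "(b - r2) *\<^sub>R y + (r2 *\<^sub>R y - x) \<in> C"
    by (rule cc_add[OF assms(1) cc_scale[OF assms(1) xC(2)] r2(2)]) (simp add: b_def)
  hence "b *\<^sub>R y - x \<in> C" by (simp add: algebra_simps)
  have "b > 0" by (simp add: b_def)
  with cc_scale[OF assms(1) \<open>b *\<^sub>R y - x \<in> C\<close>, of "1/b"]
  have 2: "y - (1/b) *\<^sub>R x \<in> C" by (simp add: scaleR_diff_right)
  have "b \<ge> 1" by (simp add: b_def)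
  thus ?thesis using 1 2 unfolding cone_le_def by blast
qed

lemma thompson_shift:
  assumes cc: "closed_cone C" and x: "x \<in> interior C" and y: "y \<in> interior C"
    and c: "0 < c" "c < 1" and cx: "u - c *\<^sub>R (x + u) \<in> C" and cy: "u - c *\<^sub>R (y + u) \<in> C"
    and d: "thompson C x y \<le> d"
  shows "thompson C (x + u) (y + u) \<le> ln ((1 - c) * exp d + c)"
proof -
  define B where "B = {\<beta>::real. \<beta> \<ge> 1 \<and> cone_le C ((1/\<beta>) *\<^sub>R x) y \<and> cone_le C y (\<beta> *\<^sub>R x)}"
  define B' where "B' = {\<beta>::real. \<beta> \<ge> 1 \<and> cone_le C ((1/\<beta>) *\<^sub>R (x+u)) (y+u) \<and> cone_le C (y+u) (\<beta> *\<^sub>R (x+u))}"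
  have Bne: "B \<noteq> {}" unfolding B_def by (rule thompson_set_ne[OF cc x y])
  have Bb: "bdd_below B" unfolding B_def by (rule bdd_belowI[of _ 1]) auto
  have B'b: "bdd_below B'" unfolding B'_def by (rule bdd_belowI[of _ 1]) auto
  have b1: "Inf B \<ge> 1" using Bne by (rule cInf_greatest) (auto simp: B_def)
  have "ln (Inf B) \<le> d" using d by (simp add: thompson_def B_def)
  hence bd: "Inf B \<le> exp d" using b1 by (metis exp_ln less_le_trans zero_less_one exp_le_cancel_iff)
  have mem: "(1 - c) * \<beta> + c \<in> B'" if "\<beta> \<in> B" for \<beta>
  proof -
    have b: "\<beta> \<ge> 1" "y - (1/\<beta>) *\<^sub>R x \<in> C" "\<beta> *\<^sub>R x - y \<in> C"
      using that by (auto simp: B_def cone_le_def)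
    from cc_scale[OF cc b(2), of \<beta>] b(1)
    have b2: "\<beta> *\<^sub>R y - x \<in> C" by (simp add: scaleR_diff_right)
    define g where "g = (1 - c) * \<beta> + c"
    have "(1 - c) * 1 \<le> (1 - c) * \<beta>" using b(1) c by (intro mult_left_mono) auto
    hence g1: "g \<ge> 1" by (simp add: g_def)
    have "(\<beta> *\<^sub>R x - y) + (\<beta> - 1) *\<^sub>R (u - c *\<^sub>R (x + u)) \<in> C"
      using cc_add[OF cc b(3) cc_scale[OF cc cx]] b(1) by simp
    moreover have "(\<beta> *\<^sub>R x - y) + (\<beta> - 1) *\<^sub>R (u - c *\<^sub>R (x + u)) = g *\<^sub>R (x + u) - (y + u)"
      by (simp add: g_def algebra_simps)
    ultimately have up: "g *\<^sub>R (x + u) - (y + u) \<in> C" by simp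
    have "(\<beta> *\<^sub>R y - x) + (\<beta> - 1) *\<^sub>R (u - c *\<^sub>R (y + u)) \<in> C"
      using cc_add[OF cc b2 cc_scale[OF cc cy]] b(1) by simp
    moreover have "(\<beta> *\<^sub>R y - x) + (\<beta> - 1) *\<^sub>R (u - c *\<^sub>R (y + u)) = g *\<^sub>R (y + u) - (x + u)"
      by (simp add: g_def algebra_simps)
    ultimately have lo: "g *\<^sub>R (y + u) - (x + u) \<in> C" by simp
    from cc_scale[OF cc lo, of "1/g"] g1
    have "(y + u) - (1/g) *\<^sub>R (x + u) \<in> C" by (simp add: scaleR_diff_right)
    thus ?thesis using up g1 unfolding B'_def cone_le_def g_def by auto
  qed
  have B'le: "Inf B' \<le> (1 - c) * Inf B + c"
  proof (rule field_le_epsilon)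
    fix e :: real assume e: "0 < e"
    obtain \<beta> where "\<beta> \<in> B" "\<beta> < Inf B + e"
      using cInf_lessD[OF Bne, of "Inf B + e"] e by auto
    hence "Inf B' \<le> (1 - c) * \<beta> + c" using mem B'b by (auto intro: cInf_lower)
    also have "\<dots> \<le> (1 - c) * (Inf B + e) + c" using \<open>\<beta> < Inf B + e\<close> c
      by (intro add_right_mono mult_left_mono) auto
    also have "\<dots> \<le> (1 - c) * Inf B + c + e" using c e by (simp add: algebra_simps)
    finally show "Inf B' \<le> (1 - c) * Inf B + c + e" .
  qed
  have B'ne: "B' \<noteq> {}" using mem Bne by blast
  have "Inf B' \<ge> 1" using B'ne by (rule cInf_greatest) (auto simp: B'_def)
  moreover have "(1 - c) * Inf B + c \<le> (1 - c) * exp d + c" using bd c by (simp add: mult_left_mono)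
  ultimately show ?thesis using B'le by (simp add: thompson_def B'_def[symmetric])
qed

theorem lemma2p4:
  fixes C :: "'a::banach set" and u :: 'a
  assumes "closed_cone C" and "normal_cone C" and "interior C \<noteq> {}"
    and "u \<in> interior C"
  shows "tau_condensing C (interior C) (\<lambda>x. x + u)"
proof -
  note cc = assms(1)
  have uC: "u \<in> C" using assms(4) interior_subset by blast
  have img: "x + u \<in> interior C" if xI: "x \<in> interior C" for x
  proof -
    obtain e where e: "e > 0" "ball x e \<subseteq> C" using xI by (meson mem_interior)
    have "ball (x + u) e \<subseteq> C"
    proof
      fix z assume "z \<in> ball (x + u) e"
      hence "z - u \<in> ball x e" by (simp add: dist_norm algebra_simps)
      hence "z - u \<in> C" using e by blast
      from cc_add[OF cc this uC] show "z \<in> C" by simp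
    qed
    thus ?thesis using e(1) by (meson mem_interior)
  qed
  have main: "tau C ((\<lambda>x. x + u) ` A) < tau C A"
    if A: "A \<subseteq> interior C" "thompson_bounded C A" "tau C A > 0" for A
  proof -
    obtain M where M: "\<forall>x\<in>A. \<forall>y\<in>A. thompson C x y \<le> M"
      using A(2) unfolding thompson_bounded_def by blast
    define D where "D = {d. d > 0 \<and> (\<exists>F. finite F \<and> A \<subseteq> \<Union>F \<and>
       (\<forall>S\<in>F. S \<subseteq> interior C \<and> (\<forall>x\<in>S. \<forall>y\<in>S. thompson C x y \<le> d)))}"
    have DbB: "bdd_below D" unfolding D_def by (rule bdd_belowI[of _ 0]) auto
    have "A \<noteq> {}"
    proof
      assume "A = {}"
      have "1 \<in> D" unfolding D_def using \<open>A = {}\<close> by (auto intro!: exI[of _ "{}"])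
      have "Inf D \<le> 0"
      proof (rule field_le_epsilon)
        fix e :: real assume "e > 0"
        hence "e \<in> D" unfolding D_def using \<open>A = {}\<close> by (auto intro!: exI[of _ "{}"])
        thus "Inf D \<le> 0 + e" using DbB by (simp add: cInf_lower)
      qed
      thus False using A(3) by (simp add: tau_def D_def)
    qed
    then obtain a where a: "a \<in> A" by blast
    have aI: "a \<in> interior C" using a A(1) by blast
    obtain r where r: "r > 0" "r *\<^sub>R u - a \<in> C" using cc_int_dom[OF cc assms(4)] by blast
    define K where "K = (exp M + 1) * r"
    have K: "K > 0" using r by (simp add: K_def add_pos_pos)
    have xK: "K *\<^sub>R u - x \<in> C" if "x \<in> A" for x
    proof -
      define B where "B = {\<beta>::real. \<beta> \<ge> 1 \<and> cone_le C ((1/\<beta>) *\<^sub>R a) x \<and> cone_le C x (\<beta> *\<^sub>R a)}"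
      have xI: "x \<in> interior C" using that A(1) by blast
      have Bne: "B \<noteq> {}" unfolding B_def by (rule thompson_set_ne[OF cc aI xI])
      have b1: "Inf B \<ge> 1" using Bne by (rule cInf_greatest) (auto simp: B_def)
      have "ln (Inf B) \<le> M" using M a that by (simp add: thompson_def B_def)
      hence "Inf B \<le> exp M" using b1 by (metis exp_ln less_le_trans zero_less_one exp_le_cancel_iff)
      then obtain \<beta> where \<beta>: "\<beta> \<in> B" "\<beta> < exp M + 1"
        using cInf_lessD[OF Bne, of "exp M + 1"] by auto
      have aC: "a \<in> C" using aI interior_subset by blast
      have h1: "\<beta> *\<^sub>R a - x \<in> C" using \<beta>(1) by (simp add: B_def cone_le_def)
      have "(exp M + 1 - \<beta>) *\<^sub>R a + (\<beta> *\<^sub>R a - x) \<in> C"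
        using cc_add[OF cc cc_scale[OF cc aC] h1] \<beta>(2) by simp
      hence h2: "(exp M + 1) *\<^sub>R a - x \<in> C" by (simp add: algebra_simps)
      have "(exp M + 1) *\<^sub>R (r *\<^sub>R u - a) \<in> C"
        by (rule cc_scale[OF cc r(2)]) (simp add: add_nonneg_nonneg)
      from cc_add[OF cc this h2] show ?thesis by (simp add: K_def algebra_simps)
    qed
    define c where "c = 1 / (K + 1)"
    have c: "0 < c" "c < 1" using K by (auto simp: c_def)
    have cx: "u - c *\<^sub>R (x + u) \<in> C" if "x \<in> A" for x
    proof -
      from cc_scale[OF cc xK[OF that], of c] c
      have "c *\<^sub>R (K *\<^sub>R u - x) \<in> C" by simp
      moreover have "c *\<^sub>R (K *\<^sub>R u - x) = u - c *\<^sub>R (x + u)"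
      proof -
        have "c * K = 1 - c" using K by (simp add: c_def field_simps)
        hence "c *\<^sub>R (K *\<^sub>R u) = (1 - c) *\<^sub>R u" by simp
        hence "c *\<^sub>R (K *\<^sub>R u) = u - c *\<^sub>R u" by (simp add: scaleR_diff_left)
        thus ?thesis by (simp add: algebra_simps)
      qed
      ultimately show ?thesis by simp
    qed
    define t where "t = tau C A"
    have tD: "t = Inf D" by (simp add: t_def tau_def D_def)
    define L where "L = ln ((exp t - c) / (1 - c))"
    have et: "exp t > 1" using A(3) by (simp add: t_def)
    have q: "(exp t - c) / (1 - c) > exp t"
    proof -
      have "exp t * (1 - c) < exp t - c" using c et by (simp add: algebra_simps)
      thus ?thesis using c by (simp add: less_divide_eq)
    qed
    have tL: "t < L" unfolding L_def using q et
      by (metis exp_less_cancel_iff exp_ln less_trans zero_less_one)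
    have Dne: "D \<noteq> {}"
    proof -
      have "max M 1 \<in> D" unfolding D_def using M A(1)
        by (auto intro!: exI[of _ "{A}"] intro: le_max_iff_disj[THEN iffD2])
      thus ?thesis by blast
    qed
    obtain d where d: "d \<in> D" "d < L" using cInf_lessD[OF Dne, of L] tL tD by auto
    obtain F where F: "finite F" "A \<subseteq> \<Union>F"
      "\<forall>S\<in>F. S \<subseteq> interior C \<and> (\<forall>x\<in>S. \<forall>y\<in>S. thompson C x y \<le> d)" and d0: "d > 0"
      using d(1) unfolding D_def by blast
    define p where "p = ln ((1 - c) * exp d + c)"
    have pos: "(1 - c) * exp d + c > 1"
    proof -
      have "(1 - c) * 1 < (1 - c) * exp d" using c d0 by (intro mult_strict_left_mono) auto
      thus ?thesis by simp
    qed
    have p0: "p > 0" using pos by (simp add: p_def)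
    have pt: "p < t"
    proof -
      have "exp d < (exp t - c) / (1 - c)" using d(2) q et unfolding L_def
        by (metis exp_less_cancel_iff exp_ln less_trans zero_less_one)
      hence "(1 - c) * exp d < exp t - c" using c by (simp add: less_divide_eq mult.commute)
      hence "(1 - c) * exp d + c < exp t" by simp
      thus ?thesis unfolding p_def using pos
        by (metis exp_less_cancel_iff exp_ln less_trans zero_less_one)
    qed
    define D' where "D' = {d. d > 0 \<and> (\<exists>F. finite F \<and> (\<lambda>x. x + u) ` A \<subseteq> \<Union>F \<and>
       (\<forall>S\<in>F. S \<subseteq> interior C \<and> (\<forall>x\<in>S. \<forall>y\<in>S. thompson C x y \<le> d)))}"
    have "p \<in> D'"
      unfolding D'_def
    proof (intro CollectI conjI p0 exI[of _ "(\<lambda>S. (\<lambda>x. x + u) ` (S \<inter> A)) ` F"])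
      show "finite ((\<lambda>S. (\<lambda>x. x + u) ` (S \<inter> A)) ` F)" using F(1) by simp
      show "(\<lambda>x. x + u) ` A \<subseteq> \<Union> ((\<lambda>S. (\<lambda>x. x + u) ` (S \<inter> A)) ` F)" using F(2) by blast
      show "\<forall>S\<in>(\<lambda>S. (\<lambda>x. x + u) ` (S \<inter> A)) ` F. S \<subseteq> interior C \<and>
              (\<forall>x\<in>S. \<forall>y\<in>S. thompson C x y \<le> p)"
      proof (intro ballI conjI)
        fix S' assume "S' \<in> (\<lambda>S. (\<lambda>x. x + u) ` (S \<inter> A)) ` F"
        then obtain S where S: "S \<in> F" "S' = (\<lambda>x. x + u) ` (S \<inter> A)" by blast
        show "S' \<subseteq> interior C" using S A(1) img by blast
        fix x' y' assume "x' \<in> S'" "y' \<in> S'"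
        then obtain x y where xy: "x \<in> S" "x \<in> A" "y \<in> S" "y \<in> A" "x' = x + u" "y' = y + u"
          using S by blast
        show "thompson C x' y' \<le> p" unfolding xy p_def
          by (rule thompson_shift[OF cc _ _ c cx[OF xy(2)] cx[OF xy(4)]]) (use xy A(1) F(3) S(1) in auto)
      qed
    qed
    have "bdd_below D'" unfolding D'_def by (rule bdd_belowI[of _ 0]) auto
    hence "tau C ((\<lambda>x. x + u) ` A) \<le> p"
      using \<open>p \<in> D'\<close> by (simp add: tau_def D'_def[symmetric] cInf_lower)
    thus ?thesis using pt by (simp add: t_def)
  qed
  show ?thesis unfolding tau_condensing_def
    using img main by (auto intro!: continuous_intros)
qed

end
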